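(* Under the setting described in the context (deterministic case, with exact partial gradients $G_{i_k} = U_{i_k}^T g(x_k)$, i.e. $\bar\sigma_k = 0$ for $k=1,\ldots,N$), suppose the random block indices $\{i_k\}$ are uniformly distributed, i.e. $p_1 = \cdots = p_b = 1/b$, and the stepsizes are set to $\gamma_k = 1/\bar L$, $k = 1,\ldots,N$, where $\bar L := \max_{i=1,\ldots,b} L_i$. Then for any $N \ge 1$, $$\mathbb{E}\big[\|\mathcal{G}_X(x_R, g(x_R), \gamma_R)\|^2\big] \le \frac{2 b \bar L\,[\phi(x_1) - \phi^*]}{N}.$$
   Context: Consider the composite problem $\phi^* := \min_{x \in X}\{\phi(x) := f(x) + \chi(x)\}$, where $X = X_1 \times \cdots \times X_b$ with $X_i \subseteq \mathbb{R}^{n_i}$ closed convex, $\sum_i n_i = n$. Let $U_i \in \mathbb{R}^{n\times n_i}$ with $(U_1,\ldots,U_b) = I_n$, $x^{(i)} = U_i^T x$, and $\|x\|^2 = \sum_{i=1}^b \|x^{(i)}\|_i^2$. The function $f$ is smooth but possibly nonconvex, with gradient $g(\cdot)$ whose blocks $g_i = U_i^T g$ satisfy $\|g_i(x + U_i\rho_i) - g_i(x)\|_{i,*} \le L_i \|\rho_i\|_i$ for all $\rho_i \in \mathbb{R}^{n_i}$. The function $\chi$ is convex and block separable: $\chi(x) = \sum_i \chi_i(x^{(i)})$ with $\chi_i$ closed convex. For each $i$, $\omega_i: X_i \to \mathbb{R}$ is continuously differentiable and $1$-strongly convex w.r.t. $\|\cdot\|_i$, with Bregman distance $V_i(z,x)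 = \omega_i(x) - \omega_i(z) - \langle \nabla\omega_i(z), x - z\rangle$, satisfying the quadratic growth condition $V_i(z,x) \le \frac{Q}{2}\|z - x\|_i^2$. The composite prox-mapping is $\mathcal{P}_i(x, y, \gamma) := \arg\min_{z \in X_i} \{\langle y, z - x\rangle + \frac{1}{\gamma} V_i(z,x) + \chi_i(z)\}$, and the composite projected gradient $\mathcal{G}_X(x,y,\gamma) = (\mathcal{G}_1,\ldots,\mathcal{G}_b)$ has blocks $\mathcal{G}_i(x,y,\gamma) := \frac{1}{\gamma}[U_i^T x - \mathcal{P}_i(U_i^T x, U_i^T y, \gamma)]$. The nonconvex stochastic block mirror descent algorithm: given $x_1 \in X$, stepsizes $\gamma_k < 2/L_i$ and probabilities $p_i$, for $k = 1,\ldots,N$ draw $i_k$ with $\Pr\{i_k = i\} = p_i$, compute the partial gradient $G_{i_k}$ (here $G_{i_k} = U_{i_k}^T g(x_k)$), and set $x_{k+1}^{(i_k)} = \mathcal{P}_{i_k}(x_k^{(i_k)}, G_{i_k}, \gamma_k)$, $x_{k+1}^{(i)} = x_k^{(i)}$ for $i \ne i_k$. The output is $\bar x_N = x_R$, where $R$ is random with $\Pr(R = k) = \frac{\gamma_k \min_{i} p_i(1 - \frac{L_i}{2}\gamma_k)}{\sum_{j=1}^N \gamma_j \min_i p_i (1 - \frac{L_i}{2}\gamma_j)}$, $k = 1,\ldots,N$. The expectation is taken w.r.t. $\{i_k\}$ and $R$. *)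

theory Defs
  imports "HOL-Analysis.Analysis"
begin

text \<open>The ambient space R^n is real^'n; the coordinates are partitioned
 into blocks 0..<b by blk :: 'n => nat. The block x^(i) = U_i^T x is represented by
 its isometric image U_i U_i^T x in R^n (zero outside block i).\<close>

definition bsub :: "('n::finite \<Rightarrow> nat) \<Rightarrow> nat \<Rightarrow> (real^'n) set" where
  "bsub blk i = {x. \<forall>j. blk j \<noteq> i \<longrightarrow> x $ j = 0}"

definition bproj :: "('n::finite \<Rightarrow> nat) \<Rightarrow> nat \<Rightarrow> real^'n \<Rightarrow> real^'n" where
  "bproj blk i x = (\<chi> j. if blk j = i then x $ j else 0)"

definition is_block_norm :: "('n::finite \<Rightarrow> nat) \<Rightarrow> nat \<Rightarrow> (real^'n \<Rightarrow> real) \<Rightarrow> bool" where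
  "is_block_norm blk i nrm \<longleftrightarrow>
     (\<forall>x\<in>bsub blk i. 0 \<le> nrm x \<and> (nrm x = 0 \<longleftrightarrow> x = 0)) \<and>
     (\<forall>x\<in>bsub blk i. \<forall>c. nrm (c *\<^sub>R x) = \<bar>c\<bar> * nrm x) \<and>
     (\<forall>x\<in>bsub blk i. \<forall>y\<in>bsub blk i. nrm (x + y) \<le> nrm x + nrm y)"

definition dual_norm :: "('n::finite \<Rightarrow> nat) \<Rightarrow> nat \<Rightarrow> (real^'n \<Rightarrow> real) \<Rightarrow> real^'n \<Rightarrow> real" where
  "dual_norm blk i nrm y = Sup ((\<lambda>z. inner y z) ` {z \<in> bsub blk i. nrm z \<le> 1})"

definition bnorm2 :: "('n::finite \<Rightarrow> nat) \<Rightarrow> nat \<Rightarrow> (nat \<Rightarrow> real^'n \<Rightarrow> real) \<Rightarrow> real^'n \<Rightarrow> real" where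
  "bnorm2 blk b nrm x = (\<Sum>i<b. (nrm i (bproj blk i x))\<^sup>2)"

definition Xprod :: "('n::finite \<Rightarrow> nat) \<Rightarrow> nat \<Rightarrow> (nat \<Rightarrow> (real^'n) set) \<Rightarrow> (real^'n) set" where
  "Xprod blk b Xb = {x. \<forall>i<b. bproj blk i x \<in> Xb i}"

definition strongly_convex_on :: "(real^'n::finite) set \<Rightarrow> (real^'n \<Rightarrow> real) \<Rightarrow> (real^'n \<Rightarrow> real) \<Rightarrow> bool" where
  "strongly_convex_on S nrm w \<longleftrightarrow>
     (\<forall>x\<in>S. \<forall>y\<in>S. \<forall>t::real. 0 \<le> t \<and> t \<le> 1 \<longrightarrow>
        w (t *\<^sub>R x + (1 - t) *\<^sub>R y) \<le> t * w x + (1 - t) * w y - t * (1 - t) / 2 * (nrm (x - y))\<^sup>2)"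

definition bregman :: "(real^'n::finite \<Rightarrow> real) \<Rightarrow> (real^'n \<Rightarrow> real^'n) \<Rightarrow> real^'n \<Rightarrow> real^'n \<Rightarrow> real" where
  "bregman w dw x z = w z - w x - inner (dw x) (z - x)"

definition prox :: "(real^'n::finite) set \<Rightarrow> (real^'n \<Rightarrow> real) \<Rightarrow> (real^'n \<Rightarrow> real^'n) \<Rightarrow> (real^'n \<Rightarrow> real)
     \<Rightarrow> real^'n \<Rightarrow> real^'n \<Rightarrow> real \<Rightarrow> real^'n" where
  "prox Xi w dw chi x y \<gamma> =
     (SOME z. z \<in> Xi \<and> (\<forall>u\<in>Xi.
        inner y (z - x) + (1 / \<gamma>) * bregman w dw x z + chi z
          \<le> inner y (u - x) + (1 / \<gamma>) * bregman w dw x u + chi u))"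

definition grad_map :: "('n::finite \<Rightarrow> nat) \<Rightarrow> nat \<Rightarrow> (nat \<Rightarrow> (real^'n) set) \<Rightarrow> (nat \<Rightarrow> real^'n \<Rightarrow> real)
     \<Rightarrow> (nat \<Rightarrow> real^'n \<Rightarrow> real^'n) \<Rightarrow> (nat \<Rightarrow> real^'n \<Rightarrow> real)
     \<Rightarrow> real^'n \<Rightarrow> real^'n \<Rightarrow> real \<Rightarrow> real^'n" where
  "grad_map blk b Xb w dw chi x y \<gamma> =
     (\<Sum>i<b. (1 / \<gamma>) *\<^sub>R (bproj blk i x - prox (Xb i) (w i) (dw i) (chi i) (bproj blk i x) (bproj blk i y) \<gamma>))"

definition phi_obj :: "('n::finite \<Rightarrow> nat) \<Rightarrow> nat \<Rightarrow> (real^'n \<Rightarrow> real) \<Rightarrow> (nat \<Rightarrow> real^'n \<Rightarrow> real) \<Rightarrow> real^'n \<Rightarrow> real" where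
  "phi_obj blk b f chi x = f x + (\<Sum>i<b. chi i (bproj blk i x))"

text \<open>Iterates of the (deterministic-gradient) nonconvex SBMD method.
  sbmd_iter ... idx m = x_(m+1); idx k = i_k is the block chosen at iteration k, gam k = gamma_k.\<close>
fun sbmd_iter :: "('n::finite \<Rightarrow> nat) \<Rightarrow> (nat \<Rightarrow> (real^'n) set) \<Rightarrow> (nat \<Rightarrow> real^'n \<Rightarrow> real)
     \<Rightarrow> (nat \<Rightarrow> real^'n \<Rightarrow> real^'n) \<Rightarrow> (nat \<Rightarrow> real^'n \<Rightarrow> real) \<Rightarrow> (real^'n \<Rightarrow> real^'n)
     \<Rightarrow> (nat \<Rightarrow> real) \<Rightarrow> real^'n \<Rightarrow> (nat \<Rightarrow> nat) \<Rightarrow> nat \<Rightarrow> real^'n" where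
  "sbmd_iter blk Xb w dw chi g gam x1 idx 0 = x1"
| "sbmd_iter blk Xb w dw chi g gam x1 idx (Suc m) =
     (let x = sbmd_iter blk Xb w dw chi g gam x1 idx m; i = idx (Suc m) in
      x - bproj blk i x
        + prox (Xb i) (w i) (dw i) (chi i) (bproj blk i x) (bproj blk i (g x)) (gam (Suc m)))"

text \<open>Distribution of the random output index R on {1..N}.\<close>
definition probR :: "nat \<Rightarrow> (nat \<Rightarrow> real) \<Rightarrow> (nat \<Rightarrow> real) \<Rightarrow> (nat \<Rightarrow> real) \<Rightarrow> nat \<Rightarrow> nat \<Rightarrow> real" where
  "probR b p L gam N k =
     gam k * Min ((\<lambda>i. p i * (1 - L i / 2 * gam k)) ` {..<b})
     / (\<Sum>j=1..N. gam j * Min ((\<lambda>i. p i * (1 - L i / 2 * gam j)) ` {..<b}))"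

text \<open>E[ ||G_X(x_R, g(x_R), gamma_R)||^2 ], expectation over i_1..i_N (independent,
  Pr(i_k = i) = p i) and over R (independent of them).\<close>
definition expected_gm2 where
  "expected_gm2 blk b nrm Xb w dw chi g p L gam x1 N =
     (\<Sum>idx\<in>Pi\<^sub>E {1..N} (\<lambda>_. {..<b}). (\<Prod>k=1..N. p (idx k)) *
        (\<Sum>k=1..N. probR b p L gam N k *
           bnorm2 blk b nrm (grad_map blk b Xb w dw chi
               (sbmd_iter blk Xb w dw chi g gam x1 idx (k - 1))
               (g (sbmd_iter blk Xb w dw chi g gam x1 idx (k - 1))) (gam k))))"

end

theory Submission
  imports Defs
begin


lemma bsub_zero[simp]: "0 \<in> bsub blk i" by (simp add: bsub_def)
lemma bsub_add: "x \<in> bsub blk i \<Longrightarrow> y \<in> bsub blk i \<Longrightarrow> x + y \<in> bsub blk i" by (simp add: bsub_def)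
lemma bsub_diff: "x \<in> bsub blk i \<Longrightarrow> y \<in> bsub blk i \<Longrightarrow> x - y \<in> bsub blk i" by (simp add: bsub_def)
lemma bsub_uminus: "x \<in> bsub blk i \<Longrightarrow> - x \<in> bsub blk i" by (simp add: bsub_def)
lemma bsub_scale: "x \<in> bsub blk i \<Longrightarrow> c *\<^sub>R x \<in> bsub blk i" by (simp add: bsub_def)
lemma bsub_sum: "(\<And>j. j \<in> S \<Longrightarrow> f j \<in> bsub blk i) \<Longrightarrow> sum f S \<in> bsub blk i"
  by (induction S rule: infinite_finite_induct) (auto intro: bsub_add)
lemma bproj_in: "bproj blk i x \<in> bsub blk i" by (simp add: bsub_def bproj_def)
lemma bproj_id: "x \<in> bsub blk i \<Longrightarrow> bproj blk i x = x" by (auto simp: bsub_def bproj_def vec_eq_iff)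
lemma bproj_other: "x \<in> bsub blk j \<Longrightarrow> j \<noteq> i \<Longrightarrow> bproj blk i x = 0" by (auto simp: bsub_def bproj_def vec_eq_iff)
lemma bproj_add: "bproj blk i (x + y) = bproj blk i x + bproj blk i y" by (auto simp: bproj_def vec_eq_iff)
lemma bproj_diff: "bproj blk i (x - y) = bproj blk i x - bproj blk i y" by (auto simp: bproj_def vec_eq_iff)
lemma bproj_scale: "bproj blk i (c *\<^sub>R x) = c *\<^sub>R bproj blk i x" by (auto simp: bproj_def vec_eq_iff)
lemma bproj_zero[simp]: "bproj blk i 0 = 0" by (auto simp: bproj_def vec_eq_iff)
lemma bproj_sum: "bproj blk i (sum f S) = (\<Sum>j\<in>S. bproj blk i (f j))"
  by (induction S rule: infinite_finite_induct) (auto simp: bproj_add)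
lemma bproj_bproj: "bproj blk j (bproj blk i x) = (if i = j then bproj blk i x else 0)"
  by (auto simp: bproj_def vec_eq_iff)
lemma inner_bproj: "\<rho> \<in> bsub blk i \<Longrightarrow> inner v \<rho> = inner (bproj blk i v) \<rho>"
  by (auto simp: bsub_def bproj_def inner_vec_def intro!: sum.cong)
lemma closed_bsub: "closed (bsub blk i)"
proof -
  have "bsub blk i = (\<Inter>j\<in>{j. blk j \<noteq> i}. {x. x $ j = 0})" by (auto simp: bsub_def)
  moreover have "closed {x::real^'a. x $ j = 0}" for j
    by (intro closed_Collect_eq continuous_intros)
  ultimately show ?thesis by auto
qed

locale bnorm =
  fixes blk :: "'n::finite \<Rightarrow> nat" and i :: nat and nrm :: "real^'n \<Rightarrow> real"
  assumes isn: "is_block_norm blk i nrm" and ex: "\<exists>j. blk j = i"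
begin

lemma nn: "x \<in> bsub blk i \<Longrightarrow> 0 \<le> nrm x" using isn by (auto simp: is_block_norm_def)
lemma zero_iff: "x \<in> bsub blk i \<Longrightarrow> nrm x = 0 \<longleftrightarrow> x = 0" using isn by (auto simp: is_block_norm_def)
lemma hom: "x \<in> bsub blk i \<Longrightarrow> nrm (c *\<^sub>R x) = \<bar>c\<bar> * nrm x" using isn by (auto simp: is_block_norm_def)
lemma tri: "x \<in> bsub blk i \<Longrightarrow> y \<in> bsub blk i \<Longrightarrow> nrm (x + y) \<le> nrm x + nrm y" using isn by (auto simp: is_block_norm_def)
lemma neg: "x \<in> bsub blk i \<Longrightarrow> nrm (- x) = nrm x" using hom[of x "-1"] by simp
lemma sym: "x \<in> bsub blk i \<Longrightarrow> y \<in> bsub blk i \<Longrightarrow> nrm (x - y) = nrm (y - x)"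
  using neg[of "y - x"] by (simp add: bsub_diff)
lemma sum_le: "finite S \<Longrightarrow> (\<And>j. j \<in> S \<Longrightarrow> f j \<in> bsub blk i) \<Longrightarrow> nrm (sum f S) \<le> (\<Sum>j\<in>S. nrm (f j))"
proof (induction S rule: finite_induct)
  case empty then show ?case using zero_iff[of 0] by simp
next
  case (insert a S)
  have "nrm (sum f (insert a S)) = nrm (f a + sum f S)" using insert by simp
  also have "\<dots> \<le> nrm (f a) + nrm (sum f S)" using insert by (intro tri) (auto intro: bsub_sum)
  also have "\<dots> \<le> nrm (f a) + (\<Sum>j\<in>S. nrm (f j))" using insert by auto
  finally show ?case using insert by simp
qed

lemma upper: "\<exists>C\<ge>0. \<forall>x\<in>bsub blk i. nrm x \<le> C * norm x"
proof -
  define J where "J = {j. blk j = i}"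
  define C where "C = (\<Sum>j\<in>J. nrm (axis j 1 :: real^'n))"
  have ax: "axis j 1 \<in> bsub blk i" if "j \<in> J" for j using that by (auto simp: J_def bsub_def axis_def)
  have ax': "c *\<^sub>R axis j 1 \<in> bsub blk i" if "j \<in> J" for j c by (intro bsub_scale ax that)
  have C0: "C \<ge> 0" unfolding C_def by (intro sum_nonneg nn ax)
  have "nrm x \<le> C * norm x" if x: "x \<in> bsub blk i" for x
  proof -
    have xe: "x = (\<Sum>j\<in>J. (x $ j) *\<^sub>R axis j 1)"
      using x by (auto simp: vec_eq_iff J_def bsub_def axis_def sum.delta' if_distrib cong: if_cong)
    have "nrm x \<le> (\<Sum>j\<in>J. nrm ((x $ j) *\<^sub>R axis j 1))"
      by (subst xe, rule sum_le) (auto intro: ax')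
    also have "\<dots> = (\<Sum>j\<in>J. \<bar>x $ j\<bar> * nrm (axis j 1))" by (intro sum.cong refl hom ax)
    also have "\<dots> \<le> (\<Sum>j\<in>J. norm x * nrm (axis j 1))"
      by (intro sum_mono mult_right_mono nn ax) (auto simp: component_le_norm_cart)
    also have "\<dots> = C * norm x" by (simp add: C_def sum_distrib_left mult.commute)
    finally show ?thesis .
  qed
  then show ?thesis using C0 by blast
qed

lemma lower: "\<exists>c>0. \<forall>x\<in>bsub blk i. c * norm x \<le> nrm x"
proof -
  obtain C where C: "C \<ge> 0" "\<And>x. x\<in>bsub blk i \<Longrightarrow> nrm x \<le> C * norm x" using upper by blast
  define T where "T = bsub blk i \<inter> sphere 0 1"
  obtain j where j: "blk j = i" using ex by blast
  have "axis j 1 \<in> bsub blk i" using j by (auto simp: bsub_def axis_def)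
  then have axT: "axis j 1 \<in> T" unfolding T_def by simp
  have cT: "compact T" unfolding T_def by (intro closed_Int_compact closed_bsub compact_sphere)
  have lip: "\<bar>nrm x - nrm y\<bar> \<le> C * norm (x - y)" if "x \<in> bsub blk i" "y \<in> bsub blk i" for x y
  proof -
    have "nrm x \<le> nrm (x - y) + nrm y" using tri[of "x - y" y] that by (simp add: bsub_diff)
    moreover have "nrm y \<le> nrm (y - x) + nrm x" using tri[of "y - x" x] that by (simp add: bsub_diff)
    moreover have "nrm (y - x) = nrm (x - y)" using sym that by simp
    moreover have "nrm (x - y) \<le> C * norm (x - y)" using C that bsub_diff by blast
    ultimately show ?thesis by linarith
  qed
  have cont: "continuous_on T nrm"
    unfolding continuous_on_iff
  proof (intro ballI allI impI)
    fix x e assume x: "x \<in> T" and e: "(0::real) < e"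
    show "\<exists>d>0. \<forall>x'\<in>T. dist x' x < d \<longrightarrow> dist (nrm x') (nrm x) < e"
    proof (intro exI[of _ "e / (C + 1)"] conjI ballI impI)
      show "0 < e / (C + 1)" using e C by simp
      fix x' assume x': "x' \<in> T" and d: "dist x' x < e / (C + 1)"
      have "dist (nrm x') (nrm x) \<le> C * norm (x' - x)" using lip x x' by (simp add: T_def dist_real_def)
      also have "\<dots> \<le> (C + 1) * norm (x' - x)" by (simp add: algebra_simps)
      also have "\<dots> < (C + 1) * (e / (C + 1))" using d C by (intro mult_strict_left_mono) (auto simp: dist_norm)
      also have "\<dots> = e" using C by simp
      finally show "dist (nrm x') (nrm x) < e" .
    qed
  qed
  obtain x0 where x0: "x0 \<in> T" "\<And>y. y \<in> T \<Longrightarrow> nrm x0 \<le> nrm y"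
    using continuous_attains_inf[OF cT _ cont] axT by blast
  have c0: "nrm x0 > 0" using x0(1) nn zero_iff by (force simp: T_def)
  have "nrm x0 * norm x \<le> nrm x" if x: "x \<in> bsub blk i" for x
  proof (cases "x = 0")
    case True then show ?thesis using zero_iff[of 0] by simp
  next
    case False
    have "(1 / norm x) *\<^sub>R x \<in> T" using x False by (auto simp: T_def bsub_scale)
    then have "nrm x0 \<le> nrm ((1 / norm x) *\<^sub>R x)" by (rule x0(2))
    also have "\<dots> = nrm x / norm x" using hom x by simp
    finally show ?thesis using False by (simp add: field_simps)
  qed
  then show ?thesis using c0 by blast
qed

lemma dual_le: assumes x: "x \<in> bsub blk i" shows "inner v x \<le> dual_norm blk i nrm v * nrm x"
proof -
  obtain c where c: "c > 0" "\<And>x. x\<in>bsub blk i \<Longrightarrow> c * norm x \<le> nrm x" using lower by blast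
  let ?A = "(\<lambda>z. inner v z) ` {z \<in> bsub blk i. nrm z \<le> 1}"
  have bdd: "bdd_above ?A"
  proof (rule bdd_aboveI2)
    fix z assume z: "z \<in> {z \<in> bsub blk i. nrm z \<le> 1}"
    have "inner v z \<le> norm v * norm z" by (rule norm_cauchy_schwarz)
    also have "\<dots> \<le> norm v * (1 / c)"
      using c z by (intro mult_left_mono) (auto simp: field_simps intro: order_trans[OF c(2)])
    finally show "inner v z \<le> norm v * (1 / c)" .
  qed
  show ?thesis
  proof (cases "x = 0")
    case True then show ?thesis using zero_iff[of 0] by simp
  next
    case False
    have n0: "nrm x > 0" using False nn[OF x] zero_iff[OF x] by linarith
    have "(1 / nrm x) *\<^sub>R x \<in> {z \<in> bsub blk i. nrm z \<le> 1}" using x n0 hom by (simp add: bsub_scale)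
    then have "inner v ((1 / nrm x) *\<^sub>R x) \<le> Sup ?A" by (rule cSup_upper[OF imageI bdd])
    then have "inner v x / nrm x \<le> dual_norm blk i nrm v" by (simp add: dual_norm_def divide_inverse mult.commute)
    then show ?thesis using n0 by (simp add: field_simps)
  qed
qed

end



lemma lsc_min:
  fixes h :: "'a::topological_space \<Rightarrow> real"
  assumes K: "compact K" "K \<noteq> {}" "K \<subseteq> D" and cl: "\<And>t. closed {u. u \<in> D \<and> h u \<le> t}"
  shows "\<exists>u\<in>K. \<forall>v\<in>K. h u \<le> h v"
proof -
  define I where "I = {t. \<exists>v\<in>K. h v \<le> t}"
  have "K \<inter> (\<Inter>t\<in>I. {u. u \<in> D \<and> h u \<le> t}) \<noteq> {}"
  proof (rule compact_imp_fip_image[OF K(1)])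
    show "closed {u. u \<in> D \<and> h u \<le> t}" for t by (rule cl)
    fix I' assume I': "finite I'" "I' \<subseteq> I"
    show "K \<inter> (\<Inter>t\<in>I'. {u. u \<in> D \<and> h u \<le> t}) \<noteq> {}"
    proof (cases "I' = {}")
      case True then show ?thesis using K by simp
    next
      case False
      have "Min I' \<in> I" using I' False Min_in by blast
      then obtain v where v: "v \<in> K" "h v \<le> Min I'" by (auto simp: I_def)
      have "v \<in> K \<inter> (\<Inter>t\<in>I'. {u. u \<in> D \<and> h u \<le> t})"
        using v K(3) I'(1) by (auto intro: order_trans[OF v(2) Min_le])
      then show ?thesis by blast
    qed
  qed
  then obtain u where u: "u \<in> K" "\<And>t. t \<in> I \<Longrightarrow> h u \<le> t" by blast
  show ?thesis using u by (intro bexI[of _ u]) (auto simp: I_def)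
qed

lemma le_lim:
  fixes a b d :: real
  assumes "\<And>t. 0 < t \<Longrightarrow> t < 1 \<Longrightarrow> a \<le> b + t * d"
  shows "a \<le> b"
proof (rule ccontr)
  assume ab: "\<not> a \<le> b"
  have d: "d > 0" using assms[of "1/2"] ab by linarith
  define t where "t = min (1/2) ((a - b) / (2 * d))"
  have t: "0 < t" "t < 1" using ab d by (auto simp: t_def)
  have "t * d \<le> (a - b) / 2" using d ab unfolding t_def
    by (cases "1/2 \<le> (a - b) / (2 * d)") (auto simp: min_def field_simps)
  then have "a - b \<le> (a - b) / 2" using assms[OF t] by linarith
  then show False using ab by (auto simp: field_simps)
qed

locale blk_setup = bnorm blk i nrm
  for blk :: "'n::finite \<Rightarrow> nat" and i nrm +
  fixes Xi :: "(real^'n) set" and w :: "real^'n \<Rightarrow> real" and dw :: "real^'n \<Rightarrow> real^'n"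
    and chi :: "real^'n \<Rightarrow> real"
  assumes Xsub: "Xi \<subseteq> bsub blk i" and Xcl: "closed Xi" and Xcv: "convex Xi"
    and chi_cvx: "convex_on Xi chi" and chi_cl: "closed {(x, t). x \<in> Xi \<and> chi x \<le> t}"
    and w_diff: "\<And>z. z \<in> Xi \<Longrightarrow> (w has_derivative (\<lambda>h. inner (dw z) h)) (at z within Xi)"
    and w_sc: "strongly_convex_on Xi nrm w"
begin

lemma comb_in: "u \<in> Xi \<Longrightarrow> v \<in> Xi \<Longrightarrow> 0 \<le> t \<Longrightarrow> t \<le> 1 \<Longrightarrow> t *\<^sub>R u + (1 - t) *\<^sub>R v \<in> Xi"
  using Xcv by (simp add: convex_def)

lemma breg_lower:
  assumes x: "x \<in> Xi" and z: "z \<in> Xi"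
  shows "bregman w dw x z \<ge> 1/2 * (nrm (z - x))\<^sup>2"
proof -
  define d where "d = z - x"
  define D where "D = inner (dw x) d"
  define n2 where "n2 = (nrm (z - x))\<^sup>2"
  define \<phi> where "\<phi> = (\<lambda>t. w (x + t *\<^sub>R d))"
  have pin: "x + t *\<^sub>R d \<in> Xi" if "0 \<le> t" "t \<le> 1" for t
  proof -
    have "x + t *\<^sub>R d = t *\<^sub>R z + (1 - t) *\<^sub>R x" by (simp add: d_def algebra_simps)
    then show ?thesis using comb_in[OF z x that] by simp
  qed
  have bound: "(\<phi> t - \<phi> 0) / t \<le> w z - w x - (1 - t) / 2 * n2" if t: "0 < t" "t < 1" for t
  proof -
    have "w (t *\<^sub>R z + (1 - t) *\<^sub>R x) \<le> t * w z + (1 - t) * w x - t * (1 - t) / 2 * (nrm (z - x))\<^sup>2"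
      using w_sc x z t unfolding strongly_convex_on_def by auto
    moreover have e: "x + t *\<^sub>R d = t *\<^sub>R z + (1 - t) *\<^sub>R x" by (simp add: d_def algebra_simps)
    moreover have "\<phi> t - \<phi> 0 = w (t *\<^sub>R z + (1 - t) *\<^sub>R x) - w x" by (simp add: \<phi>_def e)
    ultimately have "\<phi> t - \<phi> 0 \<le> t * (w z - w x - (1 - t) / 2 * n2)"
      by (simp add: n2_def algebra_simps)
    then show ?thesis using t by (simp add: divide_le_eq mult.commute)
  qed
  have "((\<lambda>t. x + t *\<^sub>R d) has_derivative (\<lambda>s. s *\<^sub>R d)) (at 0 within {0..1})"
    by (auto intro!: derivative_eq_intros)
  moreover have "(w has_derivative (\<lambda>h. inner (dw x) h)) (at x within ((\<lambda>t. x + t *\<^sub>R d) ` {0..1}))"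
    by (rule has_derivative_subset[OF w_diff[OF x]]) (use pin in auto)
  then have "(w has_derivative (\<lambda>h. inner (dw x) h)) (at ((\<lambda>t. x + t *\<^sub>R d) 0) within ((\<lambda>t. x + t *\<^sub>R d) ` {0..1}))"
    by simp
  ultimately have "((w \<circ> (\<lambda>t. x + t *\<^sub>R d)) has_derivative ((\<lambda>h. inner (dw x) h) \<circ> (\<lambda>s. s *\<^sub>R d))) (at 0 within {0..1})"
    by (rule diff_chain_within)
  then have "(\<phi> has_derivative (\<lambda>s. D * s)) (at 0 within {0..1})"
    by (simp add: \<phi>_def o_def D_def mult.commute)
  then have "(\<phi> has_field_derivative D) (at 0 within {0..1})" by (simp add: has_field_derivative_def)
  then have lim: "((\<lambda>t. (\<phi> t - \<phi> 0) / t) \<longlongrightarrow> D) (at_right 0)"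
    by (simp add: has_field_derivative_iff at_within_Icc_at_right)
  have lim2: "((\<lambda>t. w z - w x - (1 - t) / 2 * n2) \<longlongrightarrow> w z - w x - (1 - 0) / 2 * n2) (at_right 0)"
    by (intro tendsto_intros) auto
  have ev: "eventually (\<lambda>t. (\<phi> t - \<phi> 0) / t \<le> w z - w x - (1 - t) / 2 * n2) (at_right 0)"
    unfolding eventually_at_right_field using bound by (auto intro!: exI[of _ 1])
  have "D \<le> w z - w x - (1 - 0) / 2 * n2"
    by (rule tendsto_le[OF _ lim2 lim ev]) simp
  then have "D \<le> w z - w x - 1 / 2 * n2" by simp
  then show ?thesis unfolding bregman_def D_def d_def n2_def by linarith
qed

definition h :: "real^'n \<Rightarrow> real \<Rightarrow> real^'n \<Rightarrow> real^'n \<Rightarrow> real" where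
  "h y \<gamma> x u = inner y (u - x) + (1 / \<gamma>) * bregman w dw x u + chi u"

lemma h_sc:
  assumes g: "\<gamma> > 0" and u: "u \<in> Xi" and v: "v \<in> Xi" and t: "0 \<le> t" "t \<le> 1"
  shows "h y \<gamma> x (t *\<^sub>R u + (1 - t) *\<^sub>R v) \<le> t * h y \<gamma> x u + (1 - t) * h y \<gamma> x v
           - t * (1 - t) / (2 * \<gamma>) * (nrm (u - v))\<^sup>2"
proof -
  let ?p = "t *\<^sub>R u + (1 - t) *\<^sub>R v"
  have pe: "?p - x = t *\<^sub>R (u - x) + (1 - t) *\<^sub>R (v - x)" by (simp add: algebra_simps)
  have I1: "inner y (?p - x) = t * inner y (u - x) + (1 - t) * inner y (v - x)"
    by (simp only: pe inner_add_right inner_scaleR_right)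
  have I2: "inner (dw x) (?p - x) = t * inner (dw x) (u - x) + (1 - t) * inner (dw x) (v - x)"
    by (simp only: pe inner_add_right inner_scaleR_right)
  have W: "w ?p \<le> t * w u + (1 - t) * w v - t * (1 - t) / 2 * (nrm (u - v))\<^sup>2"
    using w_sc u v t unfolding strongly_convex_on_def by auto
  have W': "(1/\<gamma>) * w ?p \<le> (1/\<gamma>) * (t * w u + (1 - t) * w v - t * (1 - t) / 2 * (nrm (u - v))\<^sup>2)"
    using W g by (intro mult_left_mono) auto
  have C: "chi ?p \<le> t * chi u + (1 - t) * chi v"
    using chi_cvx u v t unfolding convex_on_def by auto
  show ?thesis using I1 I2 W' C
    by (simp add: h_def bregman_def algebra_simps diff_divide_distrib add_divide_distrib)
qed

lemma w_cont: "continuous_on Xi w"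
  using w_diff has_derivative_continuous continuous_on_eq_continuous_within by blast

lemma h_closed: "closed {u. u \<in> Xi \<and> h y \<gamma> x u \<le> t}"
proof -
  define e where "e u = inner y (u - x) + (1 / \<gamma>) * bregman w dw x u" for u
  have ce: "continuous_on Xi e" unfolding e_def bregman_def
    by (intro continuous_intros w_cont)
  have "continuous_on Xi (\<lambda>u. (u, t - e u))" by (intro continuous_intros ce)
  then have "closed (Xi \<inter> (\<lambda>u. (u, t - e u)) -` {(x, t). x \<in> Xi \<and> chi x \<le> t})"
    by (rule continuous_closed_preimage[OF _ Xcl chi_cl])
  moreover have "Xi \<inter> (\<lambda>u. (u, t - e u)) -` {(x, t). x \<in> Xi \<and> chi x \<le> t} = {u. u \<in> Xi \<and> h y \<gamma> x u \<le> t}"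
    by (auto simp: h_def e_def)
  ultimately show ?thesis by simp
qed

lemma h_min:
  assumes g: "\<gamma> > 0" and x: "x \<in> Xi"
  shows "\<exists>z\<in>Xi. \<forall>u\<in>Xi. h y \<gamma> x z \<le> h y \<gamma> x u"
proof -
  obtain c where c: "c > 0" "\<And>v. v \<in> bsub blk i \<Longrightarrow> c * norm v \<le> nrm v" using lower by blast
  define K1 where "K1 = Xi \<inter> cball x 2"
  have "\<exists>u\<in>K1. \<forall>v\<in>K1. h y \<gamma> x u \<le> h y \<gamma> x v"
    by (rule lsc_min[where D = Xi]) (use x Xcl h_closed in \<open>auto simp: K1_def intro!: closed_Int_compact\<close>)
  then obtain u0 where u0: "u0 \<in> K1" "\<And>v. v \<in> K1 \<Longrightarrow> h y \<gamma> x u0 \<le> h y \<gamma> x v" by blast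
  define m0 where "m0 = h y \<gamma> x u0"
  define t0 where "t0 = h y \<gamma> x x"
  have m0t0: "m0 \<le> t0" using u0(2)[of x] x by (simp add: K1_def m0_def t0_def)
  define S where "S = {u. u \<in> Xi \<and> h y \<gamma> x u \<le> t0}"
  define R where "R = max 2 (4 * \<gamma> * (t0 - m0) / c\<^sup>2)"
  have Sb: "S \<subseteq> cball x R"
  proof
    fix u assume uS: "u \<in> S"
    then have u: "u \<in> Xi" and hu: "h y \<gamma> x u \<le> t0" by (auto simp: S_def)
    define r where "r = norm (u - x)"
    show "u \<in> cball x R"
    proof (cases "r \<le> 2")
      case True then show ?thesis by (simp add: R_def r_def dist_norm norm_minus_commute)
    next
      case False
      then have r2: "r > 2" by simp
      define v where "v = (1 / r) *\<^sub>R u + (1 - 1 / r) *\<^sub>R x"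
      have vX: "v \<in> Xi" unfolding v_def using r2 by (intro comb_in u x) auto
      have "v - x = (1 / r) *\<^sub>R (u - x)" by (simp add: v_def algebra_simps)
      moreover have "u \<noteq> x" using r2 by (auto simp: r_def)
      ultimately have "norm (v - x) = 1" using r2 by (simp add: r_def)
      then have "v \<in> K1" using vX by (simp add: K1_def dist_norm norm_minus_commute)
      then have hv: "m0 \<le> h y \<gamma> x v" using u0(2) by (simp add: m0_def)
      have cr: "c * r \<le> nrm (u - x)" using c(2)[of "u - x"] u x Xsub by (auto simp: r_def intro: bsub_diff)
      have hsc: "h y \<gamma> x v \<le> (1/r) * h y \<gamma> x u + (1 - 1/r) * t0 - (1/r) * (1 - 1/r) / (2 * \<gamma>) * (nrm (u - x))\<^sup>2"
        unfolding v_def t0_def using r2 by (intro h_sc g u x) auto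
      have "(c * r)\<^sup>2 \<le> (nrm (u - x))\<^sup>2" using cr c r2 by (intro power_mono) auto
      then have "(1/r) * (1 - 1/r) / (2 * \<gamma>) * (c * r)\<^sup>2 \<le> (1/r) * (1 - 1/r) / (2 * \<gamma>) * (nrm (u - x))\<^sup>2"
        using r2 g by (intro mult_left_mono) auto
      moreover have "(1/r) * h y \<gamma> x u \<le> (1/r) * t0" using hu r2 by (intro mult_left_mono) auto
      ultimately have "m0 \<le> t0 - (1/r) * (1 - 1/r) / (2 * \<gamma>) * (c * r)\<^sup>2"
        using hv hsc by (simp add: algebra_simps)
      also have "(1/r) * (1 - 1/r) / (2 * \<gamma>) * (c * r)\<^sup>2 = (r - 1) * c\<^sup>2 / (2 * \<gamma>)"
        using r2 g by (simp add: field_simps power2_eq_square)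
      finally have "(r - 1) * c\<^sup>2 \<le> 2 * \<gamma> * (t0 - m0)" using g by (simp add: field_simps)
      moreover have "r * c\<^sup>2 \<le> 2 * ((r - 1) * c\<^sup>2)" using r2 c by (simp add: algebra_simps)
      ultimately have "r * c\<^sup>2 \<le> 4 * \<gamma> * (t0 - m0)" by linarith
      then have "r \<le> 4 * \<gamma> * (t0 - m0) / c\<^sup>2" using c by (simp add: field_simps)
      then show ?thesis by (simp add: R_def r_def dist_norm norm_minus_commute)
    qed
  qed
  have cS: "compact S" unfolding compact_eq_bounded_closed
    using Sb h_closed[of y \<gamma> x t0] by (auto simp: S_def intro: bounded_subset)
  have "\<exists>u\<in>S. \<forall>v\<in>S. h y \<gamma> x u \<le> h y \<gamma> x v"
    by (rule lsc_min[where D = Xi]) (use cS x h_closed in \<open>auto simp: S_def t0_def\<close>)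
  then obtain z where z: "z \<in> S" "\<And>v. v \<in> S \<Longrightarrow> h y \<gamma> x z \<le> h y \<gamma> x v" by blast
  have "h y \<gamma> x z \<le> h y \<gamma> x u" if u: "u \<in> Xi" for u
  proof (cases "h y \<gamma> x u \<le> t0")
    case True then show ?thesis using z(2) u by (simp add: S_def)
  next
    case False then show ?thesis using z(1) by (simp add: S_def)
  qed
  then show ?thesis using z(1) by (auto simp: S_def)
qed

lemma prox_prop:
  assumes g: "\<gamma> > 0" and x: "x \<in> Xi"
  shows "prox Xi w dw chi x y \<gamma> \<in> Xi"
    and "\<forall>u\<in>Xi. h y \<gamma> x (prox Xi w dw chi x y \<gamma>) \<le> h y \<gamma> x u"
proof -
  have "\<exists>z. z \<in> Xi \<and> (\<forall>u\<in>Xi. h y \<gamma> x z \<le> h y \<gamma> x u)" using h_min[OF g x] by blast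
  then have "prox Xi w dw chi x y \<gamma> \<in> Xi \<and> (\<forall>u\<in>Xi. h y \<gamma> x (prox Xi w dw chi x y \<gamma>) \<le> h y \<gamma> x u)"
    unfolding prox_def h_def by (rule someI_ex)
  then show "prox Xi w dw chi x y \<gamma> \<in> Xi" "\<forall>u\<in>Xi. h y \<gamma> x (prox Xi w dw chi x y \<gamma>) \<le> h y \<gamma> x u" by auto
qed

lemma prox_key:
  fixes y :: "real^'n"
  assumes g: "\<gamma> > 0" and x: "x \<in> Xi"
  defines "z \<equiv> prox Xi w dw chi x y \<gamma>"
  shows "z \<in> Xi" and "inner y (z - x) + chi z - chi x \<le> - (1 / \<gamma>) * (nrm (z - x))\<^sup>2"
proof -
  show zX: "z \<in> Xi" using prox_prop[OF g x] by (simp add: z_def)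
  have zmin: "\<And>u. u \<in> Xi \<Longrightarrow> h y \<gamma> x z \<le> h y \<gamma> x u" using prox_prop[OF g x] by (simp add: z_def)
  define n2 where "n2 = (nrm (z - x))\<^sup>2"
  have "x \<in> bsub blk i" "z \<in> bsub blk i" using Xsub x zX by auto
  then have n2s: "(nrm (x - z))\<^sup>2 = n2" using sym[of x z] by (simp add: n2_def)
  have hle: "h y \<gamma> x z - h y \<gamma> x x \<le> - 1 / (2 * \<gamma>) * n2"
  proof (rule le_lim)
    fix t :: real assume t: "0 < t" "t < 1"
    have "h y \<gamma> x z \<le> h y \<gamma> x (t *\<^sub>R x + (1 - t) *\<^sub>R z)" using zmin comb_in[OF x zX] t by simp
    also have "\<dots> \<le> t * h y \<gamma> x x + (1 - t) * h y \<gamma> x z - t * (1 - t) / (2 * \<gamma>) * n2"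
      using h_sc[OF g x zX, of t y x] t n2s by simp
    finally have F: "h y \<gamma> x z \<le> t * h y \<gamma> x x + (1 - t) * h y \<gamma> x z - t * (1 - t) / (2 * \<gamma>) * n2" .
    define q where "q = n2 / (2 * \<gamma>)"
    have q: "t * (1 - t) / (2 * \<gamma>) * n2 = t * q - t * (t * q)" using g by (simp add: q_def field_simps)
    have "t * (h y \<gamma> x z - h y \<gamma> x x) \<le> t * (- q + t * q)" using F unfolding q by (simp add: algebra_simps)
    then have "h y \<gamma> x z - h y \<gamma> x x \<le> - q + t * q" using t by simp
    then show "h y \<gamma> x z - h y \<gamma> x x \<le> - 1 / (2 * \<gamma>) * n2 + t * (n2 / (2 * \<gamma>))"
      by (simp add: q_def)
  qed
  define P where "P = n2 / \<gamma>"
  define B where "B = bregman w dw x z"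
  have f1: "h y \<gamma> x z - chi x \<le> - P / 2" using hle by (simp add: h_def bregman_def P_def)
  have f2: "P / 2 \<le> B / \<gamma>"
  proof -
    have "(1 / \<gamma>) * (1/2 * n2) \<le> (1 / \<gamma>) * B"
      using breg_lower[OF x zX] g by (intro mult_left_mono) (auto simp: n2_def B_def)
    then show ?thesis by (simp add: P_def)
  qed
  have f3: "h y \<gamma> x z = inner y (z - x) + B / \<gamma> + chi z" by (simp add: h_def B_def)
  have "inner y (z - x) + chi z - chi x \<le> - P" using f1 f2 f3 by linarith
  then show "inner y (z - x) + chi z - chi x \<le> - (1 / \<gamma>) * (nrm (z - x))\<^sup>2"
    by (simp add: P_def n2_def)
qed

end



lemma (in bnorm) descent:
  fixes f :: "real^'n \<Rightarrow> real" and g :: "real^'n \<Rightarrow> real^'n" and L :: real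
  assumes fgrad: "\<And>x. (f has_derivative (\<lambda>h. inner (g x) h)) (at x)"
    and Lip: "\<And>x \<rho>. \<rho> \<in> bsub blk i \<Longrightarrow>
       dual_norm blk i nrm (bproj blk i (g (x + \<rho>)) - bproj blk i (g x)) \<le> L * nrm \<rho>"
    and L0: "0 \<le> L" and \<rho>: "\<rho> \<in> bsub blk i"
  shows "f (x + \<rho>) \<le> f x + inner (g x) \<rho> + L / 2 * (nrm \<rho>)\<^sup>2"
proof -
  define n2 where "n2 = (nrm \<rho>)\<^sup>2"
  define \<psi> where "\<psi> = (\<lambda>t. f (x + t *\<^sub>R \<rho>) - t * inner (g x) \<rho> - L / 2 * t\<^sup>2 * n2)"
  have "\<psi> 1 \<le> \<psi> 0"
  proof (rule DERIV_nonpos_imp_nonincreasing[of 0 1])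
    fix t :: real assume t: "0 \<le> t" "t \<le> 1"
    have d1: "((\<lambda>t. f (x + t *\<^sub>R \<rho>)) has_derivative (\<lambda>s. inner (g (x + t *\<^sub>R \<rho>)) (s *\<^sub>R \<rho>))) (at t)"
      by (rule has_derivative_compose[of "\<lambda>t. x + t *\<^sub>R \<rho>" "\<lambda>s. s *\<^sub>R \<rho>", OF _ fgrad])
         (auto intro!: derivative_eq_intros)
    define D where "D = inner (g (x + t *\<^sub>R \<rho>)) \<rho> - inner (g x) \<rho> - L * t * n2"
    have "(\<psi> has_derivative (\<lambda>s. D * s)) (at t)"
      unfolding \<psi>_def D_def
      by (rule derivative_eq_intros d1 refl)+ (auto simp: algebra_simps power2_eq_square)
    then have "DERIV \<psi> t :> D" unfolding has_field_derivative_def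
      by (rule has_derivative_eq_rhs) (simp add: fun_eq_iff)
    moreover have "D \<le> 0"
    proof -
      have tr: "t *\<^sub>R \<rho> \<in> bsub blk i" using \<rho> by (rule bsub_scale)
      have "inner (g (x + t *\<^sub>R \<rho>)) \<rho> - inner (g x) \<rho> = inner (bproj blk i (g (x + t *\<^sub>R \<rho>)) - bproj blk i (g x)) \<rho>"
        using inner_bproj[OF \<rho>, of "g (x + t *\<^sub>R \<rho>) - g x"] by (simp add: inner_diff_left bproj_diff)
      also have "\<dots> \<le> dual_norm blk i nrm (bproj blk i (g (x + t *\<^sub>R \<rho>)) - bproj blk i (g x)) * nrm \<rho>"
        by (rule dual_le[OF \<rho>])
      also have "\<dots> \<le> (L * nrm (t *\<^sub>R \<rho>)) * nrm \<rho>"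
        by (intro mult_right_mono Lip tr nn \<rho>)
      also have "\<dots> = L * t * n2" using hom[OF \<rho>, of t] t by (simp add: n2_def power2_eq_square)
      finally show ?thesis by (simp add: D_def)
    qed
    ultimately show "\<exists>y. DERIV \<psi> t :> y \<and> y \<le> 0" by blast
  qed simp
  then show ?thesis by (simp add: \<psi>_def n2_def)
qed

locale setting =
  fixes blk :: "'n::finite \<Rightarrow> nat" and b :: nat
    and nrm :: "nat \<Rightarrow> real^'n \<Rightarrow> real"
    and Xb :: "nat \<Rightarrow> (real^'n) set"
    and f :: "real^'n \<Rightarrow> real" and g :: "real^'n \<Rightarrow> real^'n"
    and L :: "nat \<Rightarrow> real"
    and chi :: "nat \<Rightarrow> real^'n \<Rightarrow> real"
    and w :: "nat \<Rightarrow> real^'n \<Rightarrow> real" and dw :: "nat \<Rightarrow> real^'n \<Rightarrow> real^'n"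
    and Lbar :: real
  assumes blocks: "blk ` UNIV = {..<b}"
    and norms: "\<forall>i<b. is_block_norm blk i (nrm i)"
    and Xsets: "\<forall>i<b. Xb i \<subseteq> bsub blk i \<and> closed (Xb i) \<and> convex (Xb i)"
    and fgrad: "\<forall>x. (f has_derivative (\<lambda>h. inner (g x) h)) (at x)"
    and Lnonneg: "\<forall>i<b. 0 \<le> L i"
    and Lip: "\<forall>i<b. \<forall>x. \<forall>\<rho>\<in>bsub blk i.
                dual_norm blk i (nrm i) (bproj blk i (g (x + \<rho>)) - bproj blk i (g x)) \<le> L i * nrm i \<rho>"
    and chi_cvx: "\<forall>i<b. convex_on (Xb i) (chi i)"
    and chi_closed: "\<forall>i<b. closed {(x, t). x \<in> Xb i \<and> chi i x \<le> t}"
    and w_diff: "\<forall>i<b. \<forall>z\<in>Xb i. (w i has_derivative (\<lambda>h. inner (dw i z) h)) (at z within Xb i)"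
    and w_sc: "\<forall>i<b. strongly_convex_on (Xb i) (nrm i) (w i)"
    and Lbar_def: "Lbar = Max (L ` {..<b})"
    and Lbar_pos: "0 < Lbar"
begin

lemma bs: "i < b \<Longrightarrow> blk_setup blk i (nrm i) (Xb i) (w i) (dw i) (chi i)"
  unfolding blk_setup_def blk_setup_axioms_def bnorm_def
  using norms Xsets chi_cvx chi_closed w_diff w_sc blocks
  by (auto simp: image_iff) (metis lessThan_iff rangeE)

lemma L_le: "i < b \<Longrightarrow> L i \<le> Lbar"
  unfolding Lbar_def by (intro Max_ge) auto

definition "gam = 1 / Lbar"
definition "X = Xprod blk b Xb"
definition "\<Phi> = phi_obj blk b f chi"
definition "pr i x = prox (Xb i) (w i) (dw i) (chi i) (bproj blk i x) (bproj blk i (g x)) gam"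
definition "step i x = x - bproj blk i x + pr i x"
definition "GM x = grad_map blk b Xb w dw chi x (g x) gam"

lemma gam_pos: "gam > 0" using Lbar_pos by (simp add: gam_def)

lemma pr_in: "x \<in> X \<Longrightarrow> i < b \<Longrightarrow> pr i x \<in> Xb i"
proof -
  assume x: "x \<in> X" and i: "i < b"
  interpret blk_setup blk i "nrm i" "Xb i" "w i" "dw i" "chi i" by (rule bs[OF i])
  show ?thesis unfolding pr_def using prox_key(1)[OF gam_pos] x i by (simp add: X_def Xprod_def)
qed

lemma pr_bsub: "x \<in> X \<Longrightarrow> i < b \<Longrightarrow> pr i x \<in> bsub blk i"
  using pr_in Xsets by blast

lemma bproj_step: "x \<in> X \<Longrightarrow> i < b \<Longrightarrow> bproj blk j (step i x) = (if j = i then pr i x else bproj blk j x)"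
  using pr_bsub[of x i]
  by (auto simp: step_def bproj_add bproj_diff bproj_bproj bproj_id bproj_other)

lemma step_X: "x \<in> X \<Longrightarrow> i < b \<Longrightarrow> step i x \<in> X"
  using pr_in by (auto simp: X_def Xprod_def bproj_step)

lemma bproj_GM: "x \<in> X \<Longrightarrow> i < b \<Longrightarrow> bproj blk i (GM x) = (1 / gam) *\<^sub>R (bproj blk i x - pr i x)"
proof -
  assume x: "x \<in> X" and i: "i < b"
  have "bproj blk i (GM x) = (\<Sum>j<b. bproj blk i ((1 / gam) *\<^sub>R (bproj blk j x - pr j x)))"
    by (simp add: GM_def grad_map_def bproj_sum pr_def)
  also have "\<dots> = (\<Sum>j<b. if j = i then (1 / gam) *\<^sub>R (bproj blk i x - pr i x) else 0)"
  proof (rule sum.cong[OF refl])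
    fix j assume j: "j \<in> {..<b}"
    have "(1 / gam) *\<^sub>R (bproj blk j x - pr j x) \<in> bsub blk j"
      using pr_bsub[OF x] j by (auto intro!: bsub_scale bsub_diff bproj_in)
    then show "bproj blk i ((1 / gam) *\<^sub>R (bproj blk j x - pr j x)) = (if j = i then (1 / gam) *\<^sub>R (bproj blk i x - pr i x) else 0)"
      by (auto simp: bproj_id bproj_other)
  qed
  also have "\<dots> = (1 / gam) *\<^sub>R (bproj blk i x - pr i x)" using i by simp
  finally show ?thesis .
qed

lemma step_desc:
  assumes x: "x \<in> X" and i: "i < b"
  shows "(nrm i (bproj blk i (GM x)))\<^sup>2 \<le> 2 * Lbar * (\<Phi> x - \<Phi> (step i x))"
proof -
  interpret blk_setup blk i "nrm i" "Xb i" "w i" "dw i" "chi i" by (rule bs[OF i])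
  define xi where "xi = bproj blk i x"
  define z where "z = pr i x"
  have xiX: "xi \<in> Xb i" using x i by (simp add: X_def Xprod_def xi_def)
  have zb: "z \<in> bsub blk i" and xib: "xi \<in> bsub blk i" using pr_bsub[OF x i] by (auto simp: z_def xi_def bproj_in)
  define \<rho> where "\<rho> = z - xi"
  have \<rho>b: "\<rho> \<in> bsub blk i" using zb xib by (simp add: \<rho>_def bsub_diff)
  define n2 where "n2 = (nrm i \<rho>)\<^sup>2"
  have key: "inner (bproj blk i (g x)) \<rho> + chi i z - chi i xi \<le> - (1 / gam) * n2"
    using prox_key(2)[OF gam_pos xiX, of "bproj blk i (g x)"] by (simp add: z_def xi_def pr_def \<rho>_def n2_def)
  have se: "step i x = x + \<rho>" by (simp add: step_def \<rho>_def z_def xi_def)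
  have desc: "f (x + \<rho>) \<le> f x + inner (g x) \<rho> + L i / 2 * n2"
    unfolding n2_def by (rule descent[OF _ _ _ \<rho>b]) (use fgrad Lip Lnonneg i in auto)
  have ig: "inner (g x) \<rho> = inner (bproj blk i (g x)) \<rho>" by (rule inner_bproj[OF \<rho>b])
  have chisum: "(\<Sum>j<b. chi j (bproj blk j (step i x))) = (\<Sum>j<b. chi j (bproj blk j x)) - chi i xi + chi i z"
  proof -
    have "(\<Sum>j<b. chi j (bproj blk j (step i x))) = chi i z + (\<Sum>j\<in>{..<b} - {i}. chi j (bproj blk j x))"
      using i by (simp add: sum.remove[of "{..<b}" i] bproj_step[OF x i] z_def)
    moreover have "(\<Sum>j<b. chi j (bproj blk j x)) = chi i xi + (\<Sum>j\<in>{..<b} - {i}. chi j (bproj blk j x))"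
      using i by (simp add: sum.remove[of "{..<b}" i] xi_def)
    ultimately show ?thesis by simp
  qed
  have "\<Phi> (step i x) \<le> \<Phi> x + (L i / 2 - Lbar) * n2"
  proof -
    have "\<Phi> (step i x) = f (x + \<rho>) + (\<Sum>j<b. chi j (bproj blk j x)) - chi i xi + chi i z"
      using chisum se by (simp add: \<Phi>_def phi_obj_def)
    also have "\<dots> \<le> \<Phi> x + (L i / 2 - Lbar) * n2"
      using desc ig key by (simp add: \<Phi>_def phi_obj_def gam_def algebra_simps)
    finally show ?thesis .
  qed
  moreover have "(L i / 2 - Lbar) * n2 \<le> - Lbar / 2 * n2"
    using L_le[OF i] by (intro mult_right_mono) (auto simp: n2_def)
  moreover have "nrm i (bproj blk i (GM x)) = Lbar * nrm i \<rho>"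
  proof -
    have "bproj blk i (GM x) = Lbar *\<^sub>R (xi - z)" using bproj_GM[OF x i] by (simp add: gam_def xi_def z_def)
    then have "nrm i (bproj blk i (GM x)) = \<bar>Lbar\<bar> * nrm i (xi - z)" using hom[of "xi - z" Lbar] xib zb by (simp add: bsub_diff)
    also have "nrm i (xi - z) = nrm i \<rho>" using sym[OF xib zb] by (simp add: \<rho>_def)
    finally show ?thesis using Lbar_pos by simp
  qed
  ultimately have A: "\<Phi> (step i x) \<le> \<Phi> x - Lbar / 2 * n2"
    and B: "(nrm i (bproj blk i (GM x)))\<^sup>2 = Lbar * Lbar * n2"
    by (auto simp: n2_def power_mult_distrib power2_eq_square)
  have "2 * Lbar * (Lbar / 2 * n2) \<le> 2 * Lbar * (\<Phi> x - \<Phi> (step i x))"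
    using A Lbar_pos by (intro mult_left_mono) auto
  then show ?thesis using B Lbar_pos by (simp add: field_simps)
qed

end



lemma sum_PiE_Suc:
  "(\<Sum>idx\<in>Pi\<^sub>E {1..Suc m} (\<lambda>_. A). F idx) = (\<Sum>idx\<in>Pi\<^sub>E {1..m} (\<lambda>_. A). \<Sum>a\<in>A. F (idx(Suc m := a)))"
proof -
  have e: "{1..Suc m} = insert (Suc m) {1..m}" by auto
  have nin: "Suc m \<notin> {1..m}" by simp
  have "(\<Sum>idx\<in>Pi\<^sub>E {1..Suc m} (\<lambda>_. A). F idx)
      = (\<Sum>idx\<in>(\<lambda>(y, g). g(Suc m := y)) ` (A \<times> Pi\<^sub>E {1..m} (\<lambda>_. A)). F idx)"
    unfolding e PiE_insert_eq by simp
  also have "\<dots> = (\<Sum>p\<in>A \<times> Pi\<^sub>E {1..m} (\<lambda>_. A). F ((\<lambda>(y, g). g(Suc m := y)) p))"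
    by (rule sum.reindex[OF inj_combinator[OF nin], simplified comp_def])
  also have "\<dots> = (\<Sum>a\<in>A. \<Sum>idx\<in>Pi\<^sub>E {1..m} (\<lambda>_. A). F (idx(Suc m := a)))"
    by (subst sum.cartesian_product) (auto intro!: sum.cong)
  also have "\<dots> = (\<Sum>idx\<in>Pi\<^sub>E {1..m} (\<lambda>_. A). \<Sum>a\<in>A. F (idx(Suc m := a)))"
    by (rule sum.swap)
  finally show ?thesis .
qed

locale setting2 = setting +
  fixes x1 assumes x1X: "x1 \<in> Xprod blk b Xb"
    and phi_bdd: "bdd_below (phi_obj blk b f chi ` Xprod blk b Xb)"
begin

definition "it m idx = sbmd_iter blk Xb w dw chi g (\<lambda>_. 1 / Lbar) x1 idx m"

lemma it_0: "it 0 idx = x1" by (simp add: it_def)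
lemma it_Suc: "it (Suc m) idx = step (idx (Suc m)) (it m idx)"
  by (simp add: it_def Let_def step_def pr_def gam_def)

lemma it_cong: "(\<And>j. 1 \<le> j \<Longrightarrow> j \<le> m \<Longrightarrow> idx j = idx' j) \<Longrightarrow> it m idx = it m idx'"
  by (induction m) (auto simp: it_0 it_Suc)

lemma it_X: "(\<And>j. 1 \<le> j \<Longrightarrow> j \<le> m \<Longrightarrow> idx j < b) \<Longrightarrow> it m idx \<in> X"
  by (induction m) (auto simp: it_0 it_Suc intro!: step_X x1X[folded X_def])

definition "Bx x = bnorm2 blk b nrm (GM x)"

lemma Bx_le: "x \<in> X \<Longrightarrow> Bx x \<le> 2 * Lbar * (real b * \<Phi> x - (\<Sum>a<b. \<Phi> (step a x)))"
proof -
  assume x: "x \<in> X"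
  have "Bx x = (\<Sum>i<b. (nrm i (bproj blk i (GM x)))\<^sup>2)" by (simp add: Bx_def bnorm2_def)
  also have "\<dots> \<le> (\<Sum>i<b. 2 * Lbar * (\<Phi> x - \<Phi> (step i x)))" by (intro sum_mono step_desc x) auto
  also have "\<dots> = 2 * Lbar * (real b * \<Phi> x - (\<Sum>a<b. \<Phi> (step a x)))"
    by (simp add: sum_distrib_left[symmetric] sum_subtractf)
  finally show ?thesis .
qed

abbreviation "P m \<equiv> Pi\<^sub>E {1..m} (\<lambda>_. {..<b})"

definition "S m = (\<Sum>idx\<in>P m. \<Sum>k=1..m. Bx (it (k - 1) idx))"
definition "\<Psi> m = (\<Sum>idx\<in>P m. \<Phi> (it m idx))"

lemma main_ind: "S m \<le> 2 * Lbar * real b * (real b ^ m * \<Phi> x1 - \<Psi> m)"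
proof (induction m)
  case 0 then show ?case by (simp add: S_def \<Psi>_def it_0)
next
  case (Suc m)
  have itX: "idx \<in> P m \<Longrightarrow> it m idx \<in> X" for idx by (intro it_X) (auto simp: PiE_def Pi_def)
  have S1: "S (Suc m) = real b * S m + real b * (\<Sum>idx\<in>P m. Bx (it m idx))"
  proof -
    have "S (Suc m) = (\<Sum>idx\<in>P m. \<Sum>a<b. \<Sum>k=1..Suc m. Bx (it (k - 1) (idx(Suc m := a))))"
      by (simp only: S_def sum_PiE_Suc)
    also have "\<dots> = (\<Sum>idx\<in>P m. \<Sum>a<b. \<Sum>k=1..Suc m. Bx (it (k - 1) idx))"
      by (intro sum.cong refl arg_cong[where f = Bx] it_cong) auto
    also have "\<dots> = (\<Sum>idx\<in>P m. real b * ((\<Sum>k=1..m. Bx (it (k - 1) idx)) + Bx (it m idx)))"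
      by simp
    also have "\<dots> = real b * S m + real b * (\<Sum>idx\<in>P m. Bx (it m idx))"
      by (simp add: S_def sum.distrib sum_distrib_left distrib_left)
    finally show ?thesis .
  qed
  have P1: "\<Psi> (Suc m) = (\<Sum>idx\<in>P m. \<Sum>a<b. \<Phi> (step a (it m idx)))"
  proof -
    have "\<Psi> (Suc m) = (\<Sum>idx\<in>P m. \<Sum>a<b. \<Phi> (step a (it m (idx(Suc m := a)))))"
      by (simp only: \<Psi>_def sum_PiE_Suc it_Suc fun_upd_same)
    also have "\<dots> = (\<Sum>idx\<in>P m. \<Sum>a<b. \<Phi> (step a (it m idx)))"
      by (intro sum.cong refl arg_cong[where f = \<Phi>] arg_cong[where f = "step _"] it_cong) auto
    finally show ?thesis .
  qed
  have "(\<Sum>idx\<in>P m. Bx (it m idx)) \<le> (\<Sum>idx\<in>P m. 2 * Lbar * (real b * \<Phi> (it m idx) - (\<Sum>a<b. \<Phi> (step a (it m idx)))))"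
    by (intro sum_mono Bx_le itX)
  also have "\<dots> = 2 * Lbar * (real b * \<Psi> m - \<Psi> (Suc m))"
    apply (subst P1)
    apply (simp only: \<Psi>_def sum_distrib_left[symmetric] sum_subtractf[symmetric])
    apply (simp only: sum_subtractf sum_distrib_left)
    done
  finally have "(\<Sum>idx\<in>P m. Bx (it m idx)) \<le> 2 * Lbar * (real b * \<Psi> m - \<Psi> (Suc m))" .
  then have "real b * (\<Sum>idx\<in>P m. Bx (it m idx)) \<le> real b * (2 * Lbar * (real b * \<Psi> m - \<Psi> (Suc m)))"
    by (intro mult_left_mono) auto
  moreover have "real b * S m \<le> real b * (2 * Lbar * real b * (real b ^ m * \<Phi> x1 - \<Psi> m))"
    using Suc.IH by (intro mult_left_mono) auto
  ultimately show ?case unfolding S1 by (simp add: algebra_simps)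
qed

end



context setting2 begin

lemma probR_eq: assumes N: "1 \<le> N" and k: "k \<in> {1..N}"
  shows "probR b (\<lambda>_. 1 / real b) L (\<lambda>_. 1 / Lbar) N k = 1 / real N"
proof -
  define M where "M = Min ((\<lambda>i. 1 / real b * (1 - L i / 2 * (1 / Lbar))) ` {..<b})"
  have b0: "b > 0" using blocks by (metis UNIV_not_empty empty_is_image lessThan_empty_iff neq0_conv)
  have "M > 0" unfolding M_def
  proof (subst Min_gr_iff)
    show "\<forall>a\<in>(\<lambda>i. 1 / real b * (1 - L i / 2 * (1 / Lbar))) ` {..<b}. 0 < a"
    proof
      fix a assume "a \<in> (\<lambda>i. 1 / real b * (1 - L i / 2 * (1 / Lbar))) ` {..<b}"
      then obtain i where i: "i < b" and a: "a = 1 / real b * (1 - L i / 2 * (1 / Lbar))" by auto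
      have "L i / 2 * (1 / Lbar) \<le> 1 / 2" using L_le[OF i] Lbar_pos by (simp add: field_simps)
      then show "0 < a" using b0 a by simp
    qed
  qed (use b0 in auto)
  moreover have "probR b (\<lambda>_. 1 / real b) L (\<lambda>_. 1 / Lbar) N k = (1 / Lbar * M) / (\<Sum>j=1..N. 1 / Lbar * M)"
    by (simp only: probR_def M_def)
  ultimately show ?thesis using N Lbar_pos by simp
qed

lemma final:
  assumes N: "1 \<le> N"
  shows "expected_gm2 blk b nrm Xb w dw chi g (\<lambda>_. 1 / real b) L (\<lambda>_. 1 / Lbar) x1 N
           \<le> 2 * real b * Lbar * (phi_obj blk b f chi x1 - Inf (phi_obj blk b f chi ` Xprod blk b Xb)) / real N"
proof -
  define I where "I = Inf (phi_obj blk b f chi ` Xprod blk b Xb)"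
  have b0: "b > 0" using blocks by (metis UNIV_not_empty empty_is_image lessThan_empty_iff neq0_conv)
  have E: "expected_gm2 blk b nrm Xb w dw chi g (\<lambda>_. 1 / real b) L (\<lambda>_. 1 / Lbar) x1 N
        = (1 / real b) ^ N / real N * S N"
  proof -
    have "expected_gm2 blk b nrm Xb w dw chi g (\<lambda>_. 1 / real b) L (\<lambda>_. 1 / Lbar) x1 N
        = (\<Sum>idx\<in>P N. (1 / real b) ^ N * (\<Sum>k=1..N. 1 / real N * Bx (it (k - 1) idx)))"
      unfolding expected_gm2_def
      by (intro sum.cong refl arg_cong2[where f = "(*)"])
         (auto simp: probR_eq[OF N] Bx_def GM_def gam_def it_def intro!: sum.cong)
    also have "\<dots> = (1 / real b) ^ N / real N * S N"
      by (simp add: S_def sum_distrib_left[symmetric] sum_divide_distrib[symmetric])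
    finally show ?thesis .
  qed
  have PsiI: "real b ^ N * I \<le> \<Psi> N"
  proof -
    have "(\<Sum>idx\<in>P N. I) \<le> \<Psi> N" unfolding \<Psi>_def
    proof (rule sum_mono)
      fix idx assume idx: "idx \<in> P N"
      have "it N idx \<in> X" by (intro it_X) (use idx in \<open>auto simp: PiE_def Pi_def\<close>)
      then show "I \<le> \<Phi> (it N idx)" unfolding I_def \<Phi>_def X_def
        by (intro cInf_lower phi_bdd imageI)
    qed
    moreover have "card (P N) = b ^ N" by (simp add: card_PiE)
    ultimately show ?thesis by simp
  qed
  have "S N \<le> 2 * Lbar * real b * (real b ^ N * \<Phi> x1 - \<Psi> N)" by (rule main_ind)
  also have "\<dots> \<le> 2 * Lbar * real b * (real b ^ N * \<Phi> x1 - real b ^ N * I)"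
    using PsiI Lbar_pos by (intro mult_left_mono) auto
  finally have SN: "S N \<le> 2 * Lbar * real b * real b ^ N * (\<Phi> x1 - I)" by (simp add: algebra_simps)
  have "(1 / real b) ^ N / real N * S N \<le> (1 / real b) ^ N / real N * (2 * Lbar * real b * real b ^ N * (\<Phi> x1 - I))"
    by (intro mult_left_mono SN) auto
  also have "\<dots> = ((1 / real b) ^ N * real b ^ N) * (2 * real b * Lbar * (\<Phi> x1 - I) / real N)"
    by (simp add: divide_inverse ac_simps)
  also have "(1 / real b) ^ N * real b ^ N = 1" using b0 by (simp add: power_mult_distrib[symmetric])
  also have "1 * (2 * real b * Lbar * (\<Phi> x1 - I) / real N) = 2 * real b * Lbar * (\<Phi> x1 - I) / real N" by simp
  finally show ?thesis using E by (simp add: I_def \<Phi>_def)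
qed

end

theorem corollary4p4:
  fixes blk :: "'n::finite \<Rightarrow> nat" and b :: nat
    and nrm :: "nat \<Rightarrow> real^'n \<Rightarrow> real"
    and Xb :: "nat \<Rightarrow> (real^'n) set"
    and f :: "real^'n \<Rightarrow> real" and g :: "real^'n \<Rightarrow> real^'n"
    and L :: "nat \<Rightarrow> real"
    and chi :: "nat \<Rightarrow> real^'n \<Rightarrow> real"
    and w :: "nat \<Rightarrow> real^'n \<Rightarrow> real" and dw :: "nat \<Rightarrow> real^'n \<Rightarrow> real^'n"
    and Q :: real and x1 :: "real^'n" and N :: nat and Lbar :: real
  assumes blocks: "blk ` UNIV = {..<b}"
    and norms: "\<forall>i<b. is_block_norm blk i (nrm i)"
    and Xsets: "\<forall>i<b. Xb i \<subseteq> bsub blk i \<and> closed (Xb i) \<and> convex (Xb i)"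
    and fgrad: "\<forall>x. (f has_derivative (\<lambda>h. inner (g x) h)) (at x)"
    and Lnonneg: "\<forall>i<b. 0 \<le> L i"
    and Lip: "\<forall>i<b. \<forall>x. \<forall>\<rho>\<in>bsub blk i.
                dual_norm blk i (nrm i) (bproj blk i (g (x + \<rho>)) - bproj blk i (g x)) \<le> L i * nrm i \<rho>"
    and chi_cvx: "\<forall>i<b. convex_on (Xb i) (chi i)"
    and chi_closed: "\<forall>i<b. closed {(x, t). x \<in> Xb i \<and> chi i x \<le> t}"
    and w_diff: "\<forall>i<b. \<forall>z\<in>Xb i. (w i has_derivative (\<lambda>h. inner (dw i z) h)) (at z within Xb i)"
    and w_C1: "\<forall>i<b. continuous_on (Xb i) (dw i)"
    and w_sc: "\<forall>i<b. strongly_convex_on (Xb i) (nrm i) (w i)"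
    and qgrowth: "\<forall>i<b. \<forall>z\<in>Xb i. \<forall>x\<in>Xb i. bregman (w i) (dw i) z x \<le> Q / 2 * (nrm i (z - x))\<^sup>2"
    and x1X: "x1 \<in> Xprod blk b Xb"
    and phi_bdd: "bdd_below (phi_obj blk b f chi ` Xprod blk b Xb)"
    and Lbar_def: "Lbar = Max (L ` {..<b})"
    and Lbar_pos: "0 < Lbar"
    and N: "1 \<le> N"
  shows "expected_gm2 blk b nrm Xb w dw chi g (\<lambda>_. 1 / real b) L (\<lambda>_. 1 / Lbar) x1 N
           \<le> 2 * real b * Lbar * (phi_obj blk b f chi x1 - Inf (phi_obj blk b f chi ` Xprod blk b Xb)) / real N"
  proof -
  interpret setting2 blk b nrm Xb f g L chi w dw Lbar x1
    by unfold_locales (use assms in auto)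
  show ?thesis by (rule final[OF N])
qed

end
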